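(* $$\sigma(3,1)+\sigma(2,2)=3\lambda(4)=\frac{\pi^4}{32}.$$
   Context: For integers $t\geq 1$, $n\geq 1$ let $S_n^{(t)}=\sum_{k=1}^{n}\frac{1}{(2k-1)^t}$, and for integers $s\geq 2$, $t\geq 1$ let $\sigma(s,t)=\sum_{n\geq 1}\frac{S_n^{(t)}}{n^s}$. For real $s>1$, $\lambda(s)=\sum_{n\geq 1}\frac{1}{(2n-1)^s}$. *)

theory Defs
  imports "HOL-Analysis.Analysis"
begin

definition Sodd :: "nat \<Rightarrow> nat \<Rightarrow> real" where
  "Sodd t n = (\<Sum>k=1..n. 1 / (2 * real k - 1) ^ t)"

definition sigma :: "nat \<Rightarrow> nat \<Rightarrow> real" where
  "sigma s t = (\<Sum>n. Sodd t (n + 1) / real (n + 1) ^ s)"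

definition lambda :: "real \<Rightarrow> real" where
  "lambda s = (\<Sum>n. 1 / (2 * real n + 1) powr s)"

end

theory Submission
  imports Defs
begin

lemma has_sum_prod_nat:
  fixes f g :: "nat \<Rightarrow> real"
  assumes f: "(f has_sum a) UNIV" and g: "(g has_sum b) UNIV"
    and fn: "\<And>x. f x \<ge> 0" and gn: "\<And>y. g y \<ge> 0"
  shows "((\<lambda>(x,y). f x * g y) has_sum (a*b)) (UNIV \<times> UNIV)"
proof -
  have inner: "\<And>x. x \<in> UNIV \<Longrightarrow> ((\<lambda>y. (\<lambda>(x,y). f x * g y) (x, y)) has_sum (f x * b)) UNIV"
    using has_sum_cmult_right[OF g] by simp
  have outer: "((\<lambda>x. f x * b) has_sum (a*b)) UNIV"
    using has_sum_cmult_left[OF f] .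
  have "(\<lambda>(x,y). f x * g y) summable_on Sigma UNIV (\<lambda>_. UNIV)"
    by (rule summable_on_SigmaI[OF inner]) (use outer fn gn in \<open>auto simp: summable_on_def\<close>)
  then show ?thesis using has_sum_SigmaI[OF inner outer] by simp
qed

lemma odd_split:
  fixes p :: nat
  assumes Z: "((\<lambda>n. 1/(real n + 1)^p) has_sum Z) UNIV"
  shows "((\<lambda>n. 1/(2*real n + 1)^p) has_sum (Z - Z/2^p)) UNIV"
proof -
  let ?f = "\<lambda>n. 1/(real n + 1)^p"
  have U: "UNIV = range (\<lambda>n::nat. 2*n) \<union> range (\<lambda>n. 2*n+1)"
  proof -
    have "n \<in> range (\<lambda>n. 2*n) \<union> range (\<lambda>n. 2*n+1)" for n :: nat
    proof (cases "even n")
      case True then obtain k where "n = 2*k" by (auto elim: evenE)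
      then show ?thesis by auto
    next
      case False then obtain k where "n = 2*k+1" by (auto elim: oddE)
      then show ?thesis by auto
    qed
    then show ?thesis by auto
  qed
  have D: "range (\<lambda>n::nat. 2*n) \<inter> range (\<lambda>n. 2*n+1) = {}" by (auto simp: image_iff) presburger
  have "((\<lambda>n. ?f (2*n+1)) has_sum (Z/2^p)) UNIV"
  proof -
    have "((\<lambda>n. ?f n / 2^p) has_sum (Z/2^p)) UNIV"
      using has_sum_cmult_left[OF Z, of "1/2^p"] by simp
    moreover have "?f (2*n+1) = ?f n / 2^p" for n
      by (simp add: power_mult_distrib[symmetric] algebra_simps)
    ultimately show ?thesis by simp
  qed
  moreover have "inj (\<lambda>n::nat. 2*n+1)" by (auto simp: inj_on_def)
  ultimately have o: "(?f has_sum (Z/2^p)) (range (\<lambda>n. 2*n+1))"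
    using has_sum_reindex[of "\<lambda>n::nat. 2*n+1" UNIV ?f "Z/2^p"] by (simp add: o_def)
  have "?f summable_on range (\<lambda>n. 2*n)"
    using summable_on_subset_banach[OF has_sum_imp_summable[OF Z], of "range (\<lambda>n. 2*n)"] by simp
  then obtain X where e: "(?f has_sum X) (range (\<lambda>n. 2*n))" by (auto simp: summable_on_def)
  have "(?f has_sum (X + Z/2^p)) UNIV"
    using has_sum_Un_disjoint[OF e o D] U by simp
  hence ZX: "Z = X + Z/2^p" using Z has_sum_unique by blast
  hence ZX': "Z - Z/2^p = X" by simp
  have "((\<lambda>n. ?f (2*n)) has_sum X) UNIV"
    using e has_sum_reindex[of "\<lambda>n::nat. 2*n" UNIV ?f X] by (simp add: o_def inj_on_def)
  then show ?thesis unfolding ZX' by (simp add: algebra_simps)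
qed

lemma tele_shift:
  fixes a :: "nat \<Rightarrow> real"
  assumes "a \<longlonglongrightarrow> 0"
  shows "(\<lambda>d. a d - a (d+k)) sums (\<Sum>d<k. a d)"
proof (induction k)
  case 0 then show ?case by simp
next
  case (Suc k)
  have "(\<lambda>d. a (d+k)) \<longlonglongrightarrow> 0" using LIMSEQ_ignore_initial_segment[OF assms] .
  from telescope_sums'[OF this] have "(\<lambda>d. a (d+k) - a (Suc d + k)) sums a k" by simp
  from sums_add[OF Suc this] show ?case by (simp add: algebra_simps)
qed

definition Hn :: "nat \<Rightarrow> real" where "Hn k = (\<Sum>d<k. 1/(real d + 1))"

lemma Hn_Suc: "Hn (Suc k) = Hn k + 1/(real k + 1)" by (simp add: Hn_def)

lemma Hn_le: "Hn k \<le> real k"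
  unfolding Hn_def by (rule order_trans[OF sum_mono[where g="\<lambda>_. 1"]]) auto

lemma Hn_add: "Hn (a + n) = Hn a + (\<Sum>m<n. 1/(real a + real m + 1))"
  by (induction n) (auto simp: Hn_Suc algebra_simps)

definition w :: "nat \<Rightarrow> nat \<Rightarrow> real" where
  "w m n = 1/((real n+1)^2 - (real m+1)^2)"

lemma w_pos: "m < n \<Longrightarrow> w m n > 0"
  unfolding w_def by (auto intro!: power_strict_mono)

lemma U_sum: "((\<lambda>n. w m n) has_sum (Hn (2*m+2)/(2*(real m+1)))) {m<..}"
proof -
  let ?a = "\<lambda>d::nat. 1/(real d + 1)"
  have "?a \<longlonglongrightarrow> 0" using LIMSEQ_inverse_real_of_nat by (simp add: inverse_eq_divide add.commute)
  from sums_mult[OF tele_shift[OF this, of "2*m+2"], of "1/(2*(real m+1))"]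
  have "(\<lambda>d. 1/(2*(real m+1)) * (?a d - ?a (d + (2*m+2)))) sums (Hn (2*m+2)/(2*(real m+1)))"
    by (simp add: Hn_def)
  moreover have "1/(2*(real m+1)) * (?a d - ?a (d + (2*m+2))) = w m (m+1+d)" for d
    unfolding w_def by (simp add: field_simps power2_eq_square)
  ultimately have s: "(\<lambda>d. w m (m+1+d)) sums (Hn (2*m+2)/(2*(real m+1)))" by simp
  have "((\<lambda>d. w m (m+1+d)) has_sum (Hn (2*m+2)/(2*(real m+1)))) UNIV"
    by (rule sums_nonneg_imp_has_sum[OF s]) (auto intro!: less_imp_le w_pos)
  moreover have "bij_betw (\<lambda>d. m+1+d) UNIV {m<..}"
    by (rule bij_betwI[where g="\<lambda>n. n - (m+1)"]) auto
  ultimately show ?thesis using has_sum_reindex_bij_betw by blast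
qed

lemma V_closed: "(\<Sum>m<n. w m n) = (Hn (2*n+1) - 1/(real n+1))/(2*(real n+1))"
proof -
  have e: "w m n = (1/(real n - real m) + 1/(real n + real m + 2))/(2*(real n+1))" if "m<n" for m
  proof -
    have a: "real n - real m > 0" using that by simp
    have b: "(real n+1)^2 - (real m+1)^2 = (real n - real m)*(real n+real m+2)"
      by (simp add: algebra_simps power2_eq_square)
    have c: "real n+real m+2 > 0" by simp
    have "1/(real n - real m) + 1/(real n + real m + 2) = (2*(real n+1))/((real n - real m)*(real n+real m+2))"
      using a c by (simp add: field_simps)
    then show ?thesis unfolding w_def b using a c by simp
  qed
  have "(\<Sum>m<n. w m n) = (\<Sum>m<n. 1/(real n - real m) + 1/(real n + real m + 2))/(2*(real n+1))"
    by (simp add: e sum_divide_distrib)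
  also have "(\<Sum>m<n. 1/(real n - real m) + 1/(real n + real m + 2)) = (\<Sum>m<n. 1/(real n - real m)) + (\<Sum>m<n. 1/(real n + real m + 2))"
    by (simp add: sum.distrib)
  also have "(\<Sum>m<n. 1/(real n - real m)) = Hn n"
    unfolding Hn_def by (subst sum.nat_diff_reindex[symmetric]) (auto intro!: sum.cong simp: of_nat_diff)
  also have "(\<Sum>m<n. 1/(real n + real m + 2)) = Hn (n+1+n) - Hn (n+1)"
    by (subst Hn_add) (simp add: algebra_simps)
  also have "n+1+n = 2*n+1" by simp
  also have "Hn (n+1) = Hn n + 1/(real n+1)" using Hn_Suc[of n] by simp
  finally show ?thesis by (simp add: algebra_simps)
qed


lemma has_sum_diff':
  fixes f g :: "'a \<Rightarrow> real"
  assumes "(f has_sum a) A" "(g has_sum b) A"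
  shows "((\<lambda>x. f x - g x) has_sum (a - b)) A"
proof -
  have "((\<lambda>x. - g x) has_sum (- b)) A" using assms(2) by (simp add: has_sum_uminus)
  from has_sum_add[OF assms(1) this] show ?thesis by simp
qed

lemma pf_aux:
  fixes a b :: real
  assumes "a > 0" "b > 0" "b - a > 0"
  shows "1/(b-a)/a - 1/(b-a)/b = 1/a*(1/b)"
proof -
  have e: "1/a - 1/b = (b-a)/(a*b)" using assms by (simp add: field_simps)
  have "1/(b-a)/a - 1/(b-a)/b = (1/(b-a)) * (1/a - 1/b)" by (simp add: right_diff_distrib)
  also have "\<dots> = (1/(b-a)) * ((b-a)/(a*b))" by (simp only: e)
  also have "\<dots> = 1/(a*b)" using assms by simp
  finally show ?thesis by simp
qed

lemma gh_aux:
  fixes M H :: real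
  assumes "M > 0"
  shows "(H + 1/(2*M))/(2*M)/M^2 - (H - 1/M)/(2*M)/M^2 = 3/4*(1/M^4)"
proof -
  have "(H + 1/(2*M))/(2*M)/M^2 - (H - 1/M)/(2*M)/M^2 = ((H + 1/(2*M)) - (H - 1/M))/(2*M)/M^2"
    by (simp only: diff_divide_distrib)
  also have "(H + 1/(2*M)) - (H - 1/M) = 3/(2*M)" by simp
  also have "3/(2*M)/(2*M)/M^2 = 3/4*(1/M^4)" using assms by (simp add: power2_eq_square power4_eq_xxxx)
  finally show ?thesis .
qed

lemma Hn_nonneg: "0 \<le> Hn k" unfolding Hn_def by (intro sum_nonneg) auto

lemma zeta2_has_sum: "((\<lambda>n. 1/(real n+1)^2) has_sum (pi^2/6)) UNIV"
proof -
  have "(\<lambda>n. 1/(real n+1)^2) sums (pi^2/6)" using inverse_squares_sums by (simp add: add.commute)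
  then show ?thesis by (rule sums_nonneg_imp_has_sum) simp
qed

lemma zeta4_has_sum: "((\<lambda>n. 1/(real n+1)^4) has_sum (pi^4/90)) UNIV"
proof -
  note z2 = zeta2_has_sum
  have s4: "(\<lambda>n. 1/(real n+1)^4) summable_on UNIV"
  proof (rule summable_on_comparison_test)
    show "(\<lambda>n. 1/(real n+1)^2) summable_on UNIV" using has_sum_imp_summable[OF z2] .
    fix n :: nat
    have "(real n+1)^2 \<le> (real n+1)^4" by (rule power_increasing) auto
    then show "1/(real n+1)^4 \<le> 1/(real n+1)^2" by (intro divide_left_mono) auto
  qed simp
  define z4 where "z4 = infsum (\<lambda>n. 1/(real n+1)^4) UNIV"
  have h4: "((\<lambda>n. 1/(real n+1)^4) has_sum z4) UNIV" using s4 by (simp add: z4_def)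
  define S where "S = Sigma UNIV (\<lambda>m::nat. {m<..})"
  define T where "T = Sigma UNIV (\<lambda>n::nat. {..<n})"
  define g where "g m = Hn(2*m+2)/(2*(real m+1)) / (real m+1)^2" for m
  define h where "h n = (\<Sum>m<n. w m n)/(real n+1)^2" for n
  have g0: "0 \<le> g m" for m unfolding g_def using Hn_nonneg[of "2*m+2"] by simp
  have gle: "g m \<le> 1/(real m+1)^2" for m
  proof -
    have "Hn(2*m+2) \<le> 2*(real m+1)" using Hn_le[of "2*m+2"] by simp
    then have q: "Hn(2*m+2)/(2*(real m+1)) \<le> 1" by simp
    show ?thesis unfolding g_def by (rule divide_right_mono[OF q]) simp
  qed
  have h0: "0 \<le> h n" for n unfolding h_def by (intro divide_nonneg_nonneg sum_nonneg) (auto intro: less_imp_le w_pos)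
  have hle: "h n \<le> 1/(real n+1)^2" for n
  proof -
    have "Hn(2*n+1) \<le> 2*real n+1" using Hn_le[of "2*n+1"] by simp
    moreover have "0 \<le> 1/(real n+1)" by simp
    ultimately have "Hn (2*n+1) - 1/(real n+1) \<le> 2*real n+2" by linarith
    then have "Hn (2*n+1) - 1/(real n+1) \<le> 1 * (2*(real n+1))" by simp
    then have "(Hn (2*n+1) - 1/(real n+1))/(2*(real n+1)) \<le> 1"
      by (subst pos_divide_le_eq) auto
    then show ?thesis unfolding h_def V_closed by (rule divide_right_mono) simp
  qed
  have gs: "g summable_on UNIV"
    by (rule summable_on_comparison_test[OF has_sum_imp_summable[OF z2]]) (use g0 gle in auto)
  have hs: "h summable_on UNIV"
    by (rule summable_on_comparison_test[OF has_sum_imp_summable[OF z2]]) (use h0 hle in auto)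
  define F1 where "F1 = (\<lambda>(m,n). w m n / (real m+1)^2)"
  define F2 where "F2 = (\<lambda>(m,n). w m n / (real n+1)^2)"
  have in1: "((\<lambda>n. F1 (m,n)) has_sum g m) {m<..}" for m
    using has_sum_cmult_left[OF U_sum[of m], of "1/(real m+1)^2"] unfolding F1_def g_def by simp
  have F1s: "(F1 has_sum infsum g UNIV) S"
    unfolding S_def
  proof (rule has_sum_SigmaI[OF in1])
    show "(g has_sum infsum g UNIV) UNIV" using gs by simp
    show "F1 summable_on Sigma UNIV (\<lambda>m. {m<..})"
      by (rule summable_on_SigmaI[OF in1 gs]) (auto simp: F1_def intro!: divide_nonneg_nonneg less_imp_le[OF w_pos])
  qed
  define G2 where "G2 = (\<lambda>(n,m). w m n / (real n+1)^2)"
  have in2: "((\<lambda>m. G2 (n,m)) has_sum h n) {..<n}" for n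
    using has_sum_finite[of "{..<n}" "\<lambda>m. G2 (n,m)"] unfolding G2_def h_def
    by (simp add: sum_divide_distrib)
  have G2s: "(G2 has_sum infsum h UNIV) T"
    unfolding T_def
  proof (rule has_sum_SigmaI[OF in2])
    show "(h has_sum infsum h UNIV) UNIV" using hs by simp
    show "G2 summable_on Sigma UNIV (\<lambda>n. {..<n})"
      by (rule summable_on_SigmaI[OF in2 hs]) (auto simp: G2_def intro!: divide_nonneg_nonneg less_imp_le[OF w_pos])
  qed
  have bT: "bij_betw prod.swap T S" unfolding S_def T_def
    by (rule bij_betwI[where g=prod.swap]) auto
  have F2s: "(F2 has_sum infsum h UNIV) S"
  proof -
    have "((\<lambda>x. F2 (prod.swap x)) has_sum infsum h UNIV) T"
      using G2s by (rule has_sum_cong[THEN iffD1, rotated]) (auto simp: F2_def G2_def)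
    then show ?thesis using has_sum_reindex_bij_betw[OF bT] by blast
  qed
  define P where "P = (\<lambda>(m::nat,n::nat). 1/(real m+1)^2 * (1/(real n+1)^2))"
  have PS: "(P has_sum (infsum g UNIV - infsum h UNIV)) S"
  proof -
    have "((\<lambda>x. F1 x - F2 x) has_sum (infsum g UNIV - infsum h UNIV)) S"
      by (rule has_sum_diff'[OF F1s F2s])
    moreover have "F1 x - F2 x = P x" if xS: "x \<in> S" for x
    proof -
      obtain m n where x: "x = (m,n)" and mn: "m < n" using xS unfolding S_def by (cases x) auto
      have a: "(real n+1)^2 - (real m+1)^2 > 0" by (intro diff_gt_0_iff_gt[THEN iffD2] power_strict_mono) (use mn in auto)
      show ?thesis unfolding x F1_def F2_def P_def w_def using pf_aux[OF _ _ a] by simp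
    qed
    ultimately show ?thesis using has_sum_cong[of S "\<lambda>x. F1 x - F2 x" P] by simp
  qed
  have AB: "infsum g UNIV - infsum h UNIV = 3/4 * z4"
  proof -
    have "((\<lambda>m. g m - h m) has_sum (infsum g UNIV - infsum h UNIV)) UNIV"
      by (rule has_sum_diff'[OF has_sum_infsum[OF gs] has_sum_infsum[OF hs]])
    moreover have "g m - h m = 3/4 * (1/(real m+1)^4)" for m
    proof -
      have e: "Hn (2*m+2) = Hn (2*m+1) + 1/(2*(real m+1))" using Hn_Suc[of "2*m+1"] by (simp add: algebra_simps)
      show ?thesis unfolding g_def h_def V_closed e by (rule gh_aux) simp
    qed
    ultimately have "((\<lambda>m. 3/4 * (1/(real m+1)^4)) has_sum (infsum g UNIV - infsum h UNIV)) UNIV" by simp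
    moreover have "((\<lambda>m. 3/4 * (1/(real m+1)^4)) has_sum (3/4 * z4)) UNIV" by (rule has_sum_cmult_right[OF h4])
    ultimately show ?thesis using has_sum_unique by blast
  qed
  define S' where "S' = Sigma UNIV (\<lambda>m::nat. {..<m})"
  have bS: "bij_betw prod.swap S' S" unfolding S_def S'_def
    by (rule bij_betwI[where g=prod.swap]) auto
  have PS': "(P has_sum (3/4*z4)) S'"
  proof -
    have "((\<lambda>x. P (prod.swap x)) has_sum (3/4*z4)) S'"
      using has_sum_reindex_bij_betw[OF bS, of P "3/4*z4"] PS[unfolded AB] by blast
    then show ?thesis by (rule has_sum_cong[THEN iffD1, rotated]) (auto simp: P_def)
  qed
  define Di where "Di = range (\<lambda>m::nat. (m,m))"
  have PD: "(P has_sum z4) Di"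
  proof -
    have "((P \<circ> (\<lambda>m. (m,m))) has_sum z4) UNIV"
      using h4 by (rule has_sum_cong[THEN iffD1, rotated]) (simp add: P_def power2_eq_square power4_eq_xxxx)
    then show ?thesis unfolding Di_def by (subst has_sum_reindex) (auto simp: inj_on_def)
  qed
  have Pall: "(P has_sum (pi^2/6 * (pi^2/6))) (UNIV \<times> UNIV)"
    unfolding P_def by (rule has_sum_prod_nat[OF z2 z2]) auto
  have "(P has_sum (3/4*z4 + (3/4*z4 + z4))) (S \<union> (S' \<union> Di))"
    by (intro has_sum_Un_disjoint PS[unfolded AB] PS' PD) (auto simp: S_def S'_def Di_def)
  moreover have "S \<union> (S' \<union> Di) = UNIV \<times> UNIV"
    by (auto simp: S_def S'_def Di_def)
  ultimately have "pi^2/6 * (pi^2/6) = 3/4*z4 + (3/4*z4 + z4)" using Pall has_sum_unique by metis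
  then have zz: "z4 = pi^4/90" by (simp add: field_simps power4_eq_xxxx power2_eq_square)
  show ?thesis using h4 unfolding zz .
qed


lemma sym_aux:
  fixes a b :: real
  assumes "a > 0" "b > 0"
  shows "(8/(a*(a+b)^3) + 4/(a^2*(a+b)^2)) + (8/(b*(b+a)^3) + 4/(b^2*(b+a)^2)) = 4*(1/a^2*(1/b^2))"
proof -
  define c where "c = a + b"
  have c: "c > 0" "b + a = c" using assms by (auto simp: c_def)
  define DD where "DD = a^2*b^2*c^3"
  have DD: "DD > 0" using assms c by (simp add: DD_def)
  have e1: "8/(a*c^3) = 8*a*b^2/DD" using assms c unfolding DD_def by (simp add: field_simps power2_eq_square power3_eq_cube)
  have e2: "4/(a^2*c^2) = 4*b^2*c/DD" using assms c unfolding DD_def by (simp add: field_simps power2_eq_square power3_eq_cube)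
  have e3: "8/(b*c^3) = 8*a^2*b/DD" using assms c unfolding DD_def by (simp add: field_simps power2_eq_square power3_eq_cube)
  have e4: "4/(b^2*c^2) = 4*a^2*c/DD" using assms c unfolding DD_def by (simp add: field_simps power2_eq_square power3_eq_cube)
  have "(8/(a*(a+b)^3) + 4/(a^2*(a+b)^2)) + (8/(b*(b+a)^3) + 4/(b^2*(b+a)^2))
      = (8*a*b^2 + 4*b^2*c + 8*a^2*b + 4*a^2*c)/DD"
    unfolding c(2) c_def[symmetric] e1 e2 e3 e4 by (simp add: add_divide_distrib)
  also have "8*a*b^2 + 4*b^2*c + 8*a^2*b + 4*a^2*c = 4*c^3"
    unfolding c_def by (simp add: algebra_simps power2_eq_square power3_eq_cube)
  also have "4*c^3/DD = 4*(1/a^2*(1/b^2))" using c assms unfolding DD_def by simp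
  finally show ?thesis .
qed

lemma lambda2_has_sum: "((\<lambda>n. 1/(2*real n+1)^2) has_sum (pi^2/8)) UNIV"
  using odd_split[OF zeta2_has_sum] by simp

lemma lambda4_has_sum: "((\<lambda>n. 1/(2*real n+1)^4) has_sum (pi^4/96)) UNIV"
  using odd_split[OF zeta4_has_sum] by simp

lemma lambda4_val: "lambda 4 = pi^4/96"
proof -
  have "(\<lambda>n. 1 / (2 * real n + 1) powr 4) = (\<lambda>n. 1/(2*real n+1)^4)"
    by (intro ext) (simp add: powr_numeral)
  then show ?thesis unfolding lambda_def
    using has_sum_imp_sums[OF lambda4_has_sum] sums_unique by metis
qed


definition ff :: "nat \<times> nat \<Rightarrow> real" where
  "ff x = (case x of (k,i) \<Rightarrow> 8/((2*real k+1)*(2*real k+2*real i+2)^3) + 4/((2*real k+1)^2*(2*real k+2*real i+2)^2))"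

lemma ff_nonneg: "0 \<le> ff x" unfolding ff_def by (cases x) simp

lemma ff_sym: "ff (k,i) + ff (i,k) = 4*(1/(2*real k+1)^2*(1/(2*real i+1)^2))"
proof -
  have "ff (k,i) + ff (i,k) = (8/((2*real k+1)*((2*real k+1)+(2*real i+1))^3) + 4/((2*real k+1)^2*((2*real k+1)+(2*real i+1))^2))
     + (8/((2*real i+1)*((2*real i+1)+(2*real k+1))^3) + 4/((2*real i+1)^2*((2*real i+1)+(2*real k+1))^2))"
    unfolding ff_def by (simp add: algebra_simps)
  also have "\<dots> = 4*(1/(2*real k+1)^2*(1/(2*real i+1)^2))" by (rule sym_aux) auto
  finally show ?thesis .
qed

lemma ff_has_sum: "(ff has_sum (pi^4/32)) (UNIV \<times> UNIV)"
proof -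
  define Q where "Q = (\<lambda>(k::nat,i::nat). 1/(2*real k+1)^2*(1/(2*real i+1)^2))"
  have Q: "(Q has_sum (pi^2/8*(pi^2/8))) (UNIV \<times> UNIV)"
    unfolding Q_def by (rule has_sum_prod_nat[OF lambda2_has_sum lambda2_has_sum]) auto
  have Q4: "((\<lambda>x. 4 * Q x) has_sum (4*(pi^2/8*(pi^2/8)))) (UNIV \<times> UNIV)"
    by (rule has_sum_cmult_right[OF Q])
  have le: "ff x \<le> 4 * Q x" for x
  proof (cases x)
    case (Pair k i)
    have "ff (k,i) \<le> ff (k,i) + ff (i,k)" using ff_nonneg[of "(i,k)"] by simp
    then show ?thesis using ff_sym[of k i] by (simp add: Pair Q_def)
  qed
  have sm: "ff summable_on (UNIV \<times> UNIV)"
    by (rule summable_on_comparison_test[OF has_sum_imp_summable[OF Q4]]) (use le ff_nonneg in auto)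
  define X where "X = infsum ff (UNIV \<times> UNIV)"
  have hX: "(ff has_sum X) (UNIV \<times> UNIV)" using sm by (simp add: X_def)
  have bs: "bij_betw prod.swap (UNIV \<times> UNIV) (UNIV \<times> (UNIV::nat set))"
    by (rule bij_betwI[where g=prod.swap]) auto
  have hX': "((\<lambda>x. ff (prod.swap x)) has_sum X) (UNIV \<times> UNIV)"
    using has_sum_reindex_bij_betw[OF bs, of ff X] hX by blast
  have "((\<lambda>x. ff x + ff (prod.swap x)) has_sum (X + X)) (UNIV \<times> UNIV)"
    by (rule has_sum_add[OF hX hX'])
  moreover have "ff x + ff (prod.swap x) = 4 * Q x" for x
    by (cases x) (simp add: ff_sym Q_def)
  ultimately have "((\<lambda>x. 4 * Q x) has_sum (X + X)) (UNIV \<times> UNIV)" by simp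
  then have "X + X = 4*(pi^2/8*(pi^2/8))" using Q4 has_sum_unique by blast
  then have XX: "X = pi^4/32" by (simp add: field_simps power4_eq_xxxx power2_eq_square)
  show ?thesis using hX unfolding XX .
qed

lemma T_sums: "(\<lambda>n. \<Sum>k<Suc n. ff (k, n-k)) sums (pi^4/32)"
proof -
  define SS where "SS = Sigma (UNIV::nat set) (\<lambda>n. {..<Suc n})"
  have b: "bij_betw (\<lambda>(n,k). (k, n-k)) SS (UNIV \<times> UNIV)"
    unfolding SS_def by (rule bij_betwI[where g="\<lambda>(k,i). (k+i, k)"]) auto
  have "((\<lambda>x. ff ((\<lambda>(n,k). (k, n-k)) x)) has_sum (pi^4/32)) SS"
    using has_sum_reindex_bij_betw[OF b, of ff] ff_has_sum by blast
  then have "((\<lambda>(n,k). ff (k, n-k)) has_sum (pi^4/32)) SS"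
    by (rule has_sum_cong[THEN iffD1, rotated]) auto
  then have "((\<lambda>n. \<Sum>k<Suc n. ff (k, n-k)) has_sum (pi^4/32)) UNIV"
    unfolding SS_def
  proof (rule has_sum_SigmaD)
    fix n :: nat
    show "((\<lambda>k. (\<lambda>(n,k). ff (k, n-k)) (n,k)) has_sum (\<Sum>k<Suc n. ff (k, n-k))) {..<Suc n}"
      using has_sum_finite[of "{..<Suc n}" "\<lambda>k. ff (k,n-k)"] by (simp del: sum.lessThan_Suc)
  qed
  then show ?thesis by (rule has_sum_imp_sums)
qed


lemma Sodd_eq: "Sodd t (Suc n) = (\<Sum>k<Suc n. 1/(2*real k+1)^t)"
  unfolding Sodd_def using sum.atLeast1_atMost_eq[of "\<lambda>k. 1/(2*real k-1)^t" "Suc n"] by (simp add: algebra_simps)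

lemma ff_eq: "k < Suc n \<Longrightarrow> ff (k, n-k) = 1/(2*real k+1)^1/(real (n+1))^3 + 1/(2*real k+1)^2/(real (n+1))^2"
proof -
  assume k: "k < Suc n"
  then have e: "2*real k + 2*real (n-k) + 2 = 2*(real n+1)" by (simp add: of_nat_diff)
  have f: "ff (k, n-k) = 8/((2*real k+1)*(2*(real n+1))^3) + 4/((2*real k+1)^2*(2*(real n+1))^2)"
    unfolding ff_def using e by simp
  have p: "(2*(real n+1))^3 = 8*(real n+1)^3" "(2*(real n+1))^2 = 4*(real n+1)^2"
    by (simp_all only: power_mult_distrib) simp_all
  show ?thesis unfolding f p by (simp add: add.commute)
qed

lemma T_split: "(\<Sum>k<Suc n. ff (k, n-k)) = Sodd 1 (n+1)/real (n+1)^3 + Sodd 2 (n+1)/real (n+1)^2"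
  by (simp only: Suc_eq_plus1[symmetric] Sodd_eq sum_divide_distrib sum.distrib[symmetric] ff_eq cong: sum.cong)
    (rule sum.cong; simp add: ff_eq)

theorem mainTheorem16:
  shows "sigma 3 1 + sigma 2 2 = 3 * lambda 4 \<and> 3 * lambda 4 = pi ^ 4 / 32"
proof -
  define a where "a n = Sodd 1 (n+1)/real (n+1)^3" for n
  define b where "b n = Sodd 2 (n+1)/real (n+1)^2" for n
  have a0: "0 \<le> a n" for n unfolding a_def Sodd_def by (intro divide_nonneg_nonneg sum_nonneg) auto
  have b0: "0 \<le> b n" for n unfolding b_def Sodd_def by (intro divide_nonneg_nonneg sum_nonneg) auto
  have T: "(\<lambda>n. a n + b n) sums (pi^4/32)"
    using T_sums unfolding T_split a_def b_def .
  have sa: "summable a"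
    by (rule summable_comparison_test[OF _ sums_summable[OF T]]) (use a0 b0 in auto)
  have sb: "summable b"
    by (rule summable_comparison_test[OF _ sums_summable[OF T]]) (use a0 b0 in auto)
  have "sigma 3 1 + sigma 2 2 = suminf a + suminf b"
    unfolding sigma_def a_def b_def by simp
  also have "\<dots> = (\<Sum>n. a n + b n)" by (rule suminf_add[OF sa sb])
  also have "\<dots> = pi^4/32" using T sums_unique by metis
  finally have 1: "sigma 3 1 + sigma 2 2 = pi^4/32" .
  have 2: "3 * lambda 4 = pi^4/32" unfolding lambda4_val by simp
  show ?thesis using 1 2 by simp
qed

end
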